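(* Let $P$ be a finite nonempty graded poset with rank levels $P_1,\dots,P_d$, and put $L_0=\emptyset$, $L_j=P_1\sqcup\cdots\sqcup P_j$ ($1\le j\le d$). Let $m\ge1$, and identify each lower ideal $I$ of $[m]\times P$ with the tuple $(I_1,\dots,I_m)$, $I_j=\{a\in P:(j,a)\in I\}$ (so $I_m\subseteq\cdots\subseteq I_1$ are lower ideals of $P$). Let $s\ge1$, $n_0\in\mathbb{N}$, $n_1,\dots,n_s\in\mathbb{P}$ with $\sum_{k=0}^s n_k=m$, and $0\le i_s<\cdots<i_1<d$. Then $$\mathfrak{X}_{[m]\times P}(L_d^{n_0},L_{i_1}^{n_1},\dots,L_{i_s}^{n_s})=(L_{i_1+1}^{n_0+1},L_{i_2+1}^{n_1},\dots,L_{i_s+1}^{n_{s-1}},L_0^{n_s-1}),$$ where $L^{r}$ denotes $r$ consecutive copies of $L$.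
   Context: A finite poset is graded if all maximal chains have the same length; then there is a unique rank function $r:P\to\mathbb{P}$ with minimal elements of rank $1$ and $r(x)=r(y)+1$ when $x$ covers $y$; the rank levels are $P_j=r^{-1}(j)$. $[m]=\{1<2<\cdots<m\}$, $[m]\times P$ carries the product order, $\mathbb{N}=\{0,1,\dots\}$, $\mathbb{P}=\{1,2,\dots\}$. For a finite poset $Q$ and a lower ideal $I$, $\mathfrak{X}_Q(I)=\{y\in Q:y\le x\text{ for some }x\in\min(Q\setminus I)\}$. *)

theory Defs
  imports Main
begin

definition partial_order_on' :: "'a set \<Rightarrow> ('a \<Rightarrow> 'a \<Rightarrow> bool) \<Rightarrow> bool" where
  "partial_order_on' A le \<longleftrightarrow>
     (\<forall>x\<in>A. le x x) \<and>
     (\<forall>x\<in>A. \<forall>y\<in>A. le x y \<and> le y x \<longrightarrow> x = y) \<and>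
     (\<forall>x\<in>A. \<forall>y\<in>A. \<forall>z\<in>A. le x y \<and> le y z \<longrightarrow> le x z)"

definition is_chain :: "'a set \<Rightarrow> ('a \<Rightarrow> 'a \<Rightarrow> bool) \<Rightarrow> 'a set \<Rightarrow> bool" where
  "is_chain A le C \<longleftrightarrow> C \<subseteq> A \<and> (\<forall>x\<in>C. \<forall>y\<in>C. le x y \<or> le y x)"

definition is_maximal_chain :: "'a set \<Rightarrow> ('a \<Rightarrow> 'a \<Rightarrow> bool) \<Rightarrow> 'a set \<Rightarrow> bool" where
  "is_maximal_chain A le C \<longleftrightarrow> is_chain A le C \<and> (\<forall>D. is_chain A le D \<and> C \<subseteq> D \<longrightarrow> D = C)"

definition graded :: "'a set \<Rightarrow> ('a \<Rightarrow> 'a \<Rightarrow> bool) \<Rightarrow> bool" where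
  "graded A le \<longleftrightarrow> (\<forall>C D. is_maximal_chain A le C \<and> is_maximal_chain A le D \<longrightarrow> card C = card D)"

definition covers :: "'a set \<Rightarrow> ('a \<Rightarrow> 'a \<Rightarrow> bool) \<Rightarrow> 'a \<Rightarrow> 'a \<Rightarrow> bool" where
  "covers A le x y \<longleftrightarrow> x \<in> A \<and> y \<in> A \<and> le y x \<and> y \<noteq> x \<and>
     \<not> (\<exists>z\<in>A. le y z \<and> y \<noteq> z \<and> le z x \<and> z \<noteq> x)"

definition is_rank_function :: "'a set \<Rightarrow> ('a \<Rightarrow> 'a \<Rightarrow> bool) \<Rightarrow> ('a \<Rightarrow> nat) \<Rightarrow> bool" where
  "is_rank_function A le r \<longleftrightarrow>
     (\<forall>x\<in>A. (\<forall>y\<in>A. le y x \<longrightarrow> y = x) \<longrightarrow> r x = 1) \<and>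
     (\<forall>x\<in>A. \<forall>y\<in>A. covers A le x y \<longrightarrow> r x = r y + 1)"

definition lower_ideal :: "'a set \<Rightarrow> ('a \<Rightarrow> 'a \<Rightarrow> bool) \<Rightarrow> 'a set \<Rightarrow> bool" where
  "lower_ideal Q le I \<longleftrightarrow> I \<subseteq> Q \<and> (\<forall>x\<in>I. \<forall>y\<in>Q. le y x \<longrightarrow> y \<in> I)"

definition minimal_elems :: "'a set \<Rightarrow> ('a \<Rightarrow> 'a \<Rightarrow> bool) \<Rightarrow> 'a set" where
  "minimal_elems S le = {x\<in>S. \<forall>y\<in>S. le y x \<longrightarrow> y = x}"

definition frakX :: "'a set \<Rightarrow> ('a \<Rightarrow> 'a \<Rightarrow> bool) \<Rightarrow> 'a set \<Rightarrow> 'a set" where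
  "frakX Q le I = {y\<in>Q. \<exists>x\<in>minimal_elems (Q - I) le. le y x}"

definition prod_carrier :: "nat \<Rightarrow> 'a set \<Rightarrow> (nat \<times> 'a) set" where
  "prod_carrier m A = {1..m} \<times> A"

definition prod_le :: "('a \<Rightarrow> 'a \<Rightarrow> bool) \<Rightarrow> nat \<times> 'a \<Rightarrow> nat \<times> 'a \<Rightarrow> bool" where
  "prod_le le p q \<longleftrightarrow> fst p \<le> fst q \<and> le (snd p) (snd q)"

text \<open>The subset of [m] x P corresponding to a tuple (I_1,...,I_m), given as a list.\<close>
definition set_of_tuple :: "'a set list \<Rightarrow> (nat \<times> 'a) set" where
  "set_of_tuple xs = {(j, a). 1 \<le> j \<and> j \<le> length xs \<and> a \<in> xs ! (j - 1)}"

definition Lset :: "'a set \<Rightarrow> ('a \<Rightarrow> nat) \<Rightarrow> nat \<Rightarrow> 'a set" where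
  "Lset A r j = {x\<in>A. r x \<le> j}"

end

theory Submission
  imports Defs
begin

lemma fin_max:
  assumes fin: "finite A" and po: "partial_order_on' A le" and SA: "S \<subseteq> A" and xS: "x \<in> S"
  shows "\<exists>w\<in>S. le x w \<and> (\<forall>z\<in>S. le w z \<longrightarrow> z = w)"
proof -
  define f where "f z = card {u\<in>A. le u z}" for z
  define U where "U = {z\<in>S. le x z}"
  have xA: "x \<in> A" using SA xS by auto
  have refl: "\<And>y. y \<in> A \<Longrightarrow> le y y" using po unfolding partial_order_on'_def by blast
  have antis: "\<And>y z. y \<in> A \<Longrightarrow> z \<in> A \<Longrightarrow> le y z \<Longrightarrow> le z y \<Longrightarrow> y = z"
    using po unfolding partial_order_on'_def by blast
  have trans: "\<And>y z v. y \<in> A \<Longrightarrow> z \<in> A \<Longrightarrow> v \<in> A \<Longrightarrow> le y z \<Longrightarrow> le z v \<Longrightarrow> le y v"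
    using po unfolding partial_order_on'_def by blast
  have Ufin: "finite U" using fin SA unfolding U_def by (auto intro: finite_subset)
  have Une: "x \<in> U" using xS refl xA unfolding U_def by auto
  obtain w where wU: "w \<in> U" and wmax: "f w = Max (f ` U)"
    using Max_in[of "f ` U"] Ufin Une by (metis empty_iff finite_imageI image_iff image_is_empty)
  show ?thesis
  proof (rule bexI[of _ w], intro conjI ballI impI)
    show "w \<in> S" "le x w" using wU unfolding U_def by auto
  next
    fix z assume zS: "z \<in> S" and wz: "le w z"
    have wA: "w \<in> A" and zA: "z \<in> A" using wU zS SA unfolding U_def by auto
    have zU: "z \<in> U" using zS wz wU trans[OF xA wA zA] unfolding U_def by auto
    have "f z \<le> f w" using wmax Ufin zU by simp
    show "z = w"
    proof (rule ccontr)
      assume ne: "z \<noteq> w"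
      have "{u\<in>A. le u w} \<subset> {u\<in>A. le u z}"
      proof
        show "{u\<in>A. le u w} \<subseteq> {u\<in>A. le u z}" using trans wA zA wz by blast
        have "z \<notin> {u\<in>A. le u w}" using antis[OF wA zA wz] ne by auto
        moreover have "z \<in> {u\<in>A. le u z}" using refl zA by auto
        ultimately show "{u\<in>A. le u w} \<noteq> {u\<in>A. le u z}" by blast
      qed
      hence "f w < f z" unfolding f_def using fin by (simp add: psubset_card_mono)
      with \<open>f z \<le> f w\<close> show False by simp
    qed
  qed
qed

lemma fin_min:
  assumes fin: "finite A" and po: "partial_order_on' A le" and SA: "S \<subseteq> A" and xS: "x \<in> S"
  shows "\<exists>w\<in>S. le w x \<and> (\<forall>z\<in>S. le z w \<longrightarrow> z = w)"
proof -
  have po': "partial_order_on' A (\<lambda>x y. le y x)" using po unfolding partial_order_on'_def by blast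
  show ?thesis using fin_max[OF fin po' SA xS] by simp
qed

lemma rank_key:
  assumes fin: "finite A" and po: "partial_order_on' A le" and rk: "is_rank_function A le r"
    and bA: "b \<in> A"
  shows "x \<in> A \<Longrightarrow> le b x \<Longrightarrow> r b \<le> r x \<and> (b \<noteq> x \<longrightarrow> r b < r x) \<and>
     (\<forall>t. r b \<le> t \<and> t \<le> r x \<longrightarrow> (\<exists>y\<in>A. le b y \<and> le y x \<and> r y = t))"
proof (induction "r x" arbitrary: x rule: less_induct)
  case less
  have refl: "\<And>y. y \<in> A \<Longrightarrow> le y y" using po unfolding partial_order_on'_def by blast
  have antis: "\<And>y z. y \<in> A \<Longrightarrow> z \<in> A \<Longrightarrow> le y z \<Longrightarrow> le z y \<Longrightarrow> y = z"
    using po unfolding partial_order_on'_def by blast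
  have trans: "\<And>y z v. y \<in> A \<Longrightarrow> z \<in> A \<Longrightarrow> v \<in> A \<Longrightarrow> le y z \<Longrightarrow> le z v \<Longrightarrow> le y v"
    using po unfolding partial_order_on'_def by blast
  show ?case
  proof (cases "b = x")
    case True
    have "le x x" using refl less.prems(1) by blast
    then show ?thesis using True less.prems(1) le_antisym by blast
  next
    case False
    define W where "W = {w\<in>A. le w x \<and> w \<noteq> x}"
    have bW: "b \<in> W" using False less bA unfolding W_def by auto
    obtain w where wW: "w \<in> W" and bw: "le b w" and wmax: "\<forall>z\<in>W. le w z \<longrightarrow> z = w"
      using fin_max[OF fin po _ bW] unfolding W_def by auto
    have wA: "w \<in> A" and wx: "le w x" and wnx: "w \<noteq> x" using wW unfolding W_def by auto
    have cov: "covers A le x w"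
      unfolding covers_def using less.prems wA wx wnx wmax unfolding W_def by auto
    hence rx: "r x = r w + 1" using rk wA less.prems unfolding is_rank_function_def by blast
    have IH: "r b \<le> r w \<and> (b \<noteq> w \<longrightarrow> r b < r w) \<and>
     (\<forall>t. r b \<le> t \<and> t \<le> r w \<longrightarrow> (\<exists>y\<in>A. le b y \<and> le y w \<and> r y = t))"
      using less.hyps[of w] rx wA bw by simp
    show ?thesis
    proof (intro conjI impI allI)
      show "r b \<le> r x" "r b < r x" using IH rx by auto
    next
      fix t assume t: "r b \<le> t \<and> t \<le> r x"
      show "\<exists>y\<in>A. le b y \<and> le y x \<and> r y = t"
      proof (cases "t = r x")
        case True then show ?thesis using less.prems refl by auto
      next
        case False
        hence "t \<le> r w" using t rx by simp
        then obtain y where "y \<in> A" "le b y" "le y w" "r y = t" using IH t by blast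
        then show ?thesis using trans[OF _ wA less.prems(1)] wx by blast
      qed
    qed
  qed
qed


lemma rank_ge1_F1:
  assumes fin: "finite A" and po: "partial_order_on' A le" and rk: "is_rank_function A le r"
    and xA: "x \<in> A"
  shows "1 \<le> r x \<and> (\<forall>t. 1 \<le> t \<and> t \<le> r x \<longrightarrow> (\<exists>y\<in>A. le y x \<and> r y = t))"
proof -
  obtain b where bA: "b \<in> A" and bx: "le b x" and bmin: "\<forall>z\<in>A. le z b \<longrightarrow> z = b"
    using fin_min[OF fin po _ xA] by auto
  have rb: "r b = 1" using rk bA bmin unfolding is_rank_function_def by blast
  show ?thesis using rank_key[OF fin po rk bA xA bx] rb by auto
qed

lemma chain_ex:
  assumes fin: "finite A" and po: "partial_order_on' A le" and rk: "is_rank_function A le r"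
  shows "x \<in> A \<Longrightarrow> \<exists>C. C \<subseteq> A \<and> x \<in> C \<and> finite C \<and> card C = r x \<and> (\<forall>y\<in>C. le y x) \<and>
     is_chain A le C \<and> (\<forall>w\<in>A. le w x \<and> (\<forall>c\<in>C. le w c \<or> le c w) \<longrightarrow> w \<in> C)"
proof (induction "r x" arbitrary: x rule: less_induct)
  case less
  have refl: "\<And>y. y \<in> A \<Longrightarrow> le y y" using po unfolding partial_order_on'_def by blast
  have antis: "\<And>y z. y \<in> A \<Longrightarrow> z \<in> A \<Longrightarrow> le y z \<Longrightarrow> le z y \<Longrightarrow> y = z"
    using po unfolding partial_order_on'_def by blast
  have trans: "\<And>y z v. y \<in> A \<Longrightarrow> z \<in> A \<Longrightarrow> v \<in> A \<Longrightarrow> le y z \<Longrightarrow> le z v \<Longrightarrow> le y v"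
    using po unfolding partial_order_on'_def by blast
  show ?case
  proof (cases "\<forall>y\<in>A. le y x \<longrightarrow> y = x")
    case True
    hence rx: "r x = 1" using rk less.prems unfolding is_rank_function_def by blast
    show ?thesis
      by (rule exI[of _ "{x}"]) (use less.prems True rx refl in \<open>auto simp: is_chain_def\<close>)
  next
    case False
    then obtain y where yA: "y \<in> A" and yx: "le y x" and ynx: "y \<noteq> x" by blast
    define W where "W = {w\<in>A. le w x \<and> w \<noteq> x}"
    have yW: "y \<in> W" using yA yx ynx unfolding W_def by auto
    obtain w where wW: "w \<in> W" and wmax: "\<forall>z\<in>W. le w z \<longrightarrow> z = w"
      using fin_max[OF fin po _ yW] unfolding W_def by auto
    have wA: "w \<in> A" and wx: "le w x" and wnx: "w \<noteq> x" using wW unfolding W_def by auto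
    have cov: "covers A le x w"
      unfolding covers_def using less.prems wA wx wnx wmax unfolding W_def by auto
    hence rx: "r x = r w + 1" using rk wA less.prems unfolding is_rank_function_def by blast
    obtain C where CA: "C \<subseteq> A" and wC: "w \<in> C" and Cfin: "finite C" and Ccard: "card C = r w"
      and Cle: "\<forall>y\<in>C. le y w" and Cch: "is_chain A le C"
      and Csat: "\<forall>v\<in>A. le v w \<and> (\<forall>c\<in>C. le v c \<or> le c v) \<longrightarrow> v \<in> C"
      using less.hyps[of w] rx wA by auto
    have xnC: "x \<notin> C"
    proof
      assume "x \<in> C"
      hence "le x w" using Cle by auto
      thus False using antis[OF wA less.prems wx] wnx by auto
    qed
    have Cle': "\<forall>y\<in>C. le y x" using Cle CA trans[OF _ wA less.prems] wx by blast
    show ?thesis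
    proof (rule exI[of _ "insert x C"], intro conjI ballI impI)
      show "insert x C \<subseteq> A" "x \<in> insert x C" "finite (insert x C)" using CA less.prems Cfin by auto
      show "card (insert x C) = r x" using Cfin xnC Ccard rx by simp
    next
      fix y assume "y \<in> insert x C" thus "le y x" using Cle' refl less.prems by auto
    next
      show "is_chain A le (insert x C)"
        using Cch Cle' CA less.prems refl unfolding is_chain_def by blast
    next
      fix v assume vA: "v \<in> A" and h: "le v x \<and> (\<forall>c\<in>insert x C. le v c \<or> le c v)"
      show "v \<in> insert x C"
      proof (cases "v = x")
        case True thus ?thesis by simp
      next
        case False
        have "le v w \<or> le w v" using h wC by auto
        thus ?thesis
        proof
          assume "le v w" thus ?thesis using Csat vA h by auto
        next
          assume "le w v"
          hence "v = w" using wmax vA h False unfolding W_def by auto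
          thus ?thesis using wC by simp
        qed
      qed
    qed
  qed
qed

lemma max_chain_ex:
  assumes fin: "finite A" and po: "partial_order_on' A le" and rk: "is_rank_function A le r"
    and xA: "x \<in> A" and xmax: "\<forall>z\<in>A. le x z \<longrightarrow> z = x"
  shows "\<exists>C. is_maximal_chain A le C \<and> card C = r x"
proof -
  obtain C where CA: "C \<subseteq> A" and xC: "x \<in> C" and Ccard: "card C = r x"
      and Cch: "is_chain A le C"
      and Csat: "\<forall>v\<in>A. le v x \<and> (\<forall>c\<in>C. le v c \<or> le c v) \<longrightarrow> v \<in> C"
    using chain_ex[OF fin po rk xA] by blast
  have "is_maximal_chain A le C"
    unfolding is_maximal_chain_def
  proof (intro conjI allI impI Cch)
    fix D assume h: "is_chain A le D \<and> C \<subseteq> D"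
    have "D \<subseteq> C"
    proof
      fix v assume vD: "v \<in> D"
      have vA: "v \<in> A" using h vD unfolding is_chain_def by auto
      have cmp: "\<forall>c\<in>C. le v c \<or> le c v" using h vD unfolding is_chain_def by blast
      hence "le v x \<or> le x v" using xC by auto
      thus "v \<in> C"
      proof
        assume "le x v" thus ?thesis using xmax vA xC by auto
      next
        assume "le v x" thus ?thesis using Csat vA cmp by auto
      qed
    qed
    thus "D = C" using h by auto
  qed
  thus ?thesis using Ccard by blast
qed

lemma F2:
  assumes fin: "finite A" and po: "partial_order_on' A le" and rk: "is_rank_function A le r"
    and gr: "graded A le" and dd: "d = Max (r ` A)"
    and bA: "b \<in> A" and t1: "r b \<le> t" and t2: "t \<le> d"
  shows "\<exists>y\<in>A. le b y \<and> r y = t"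
proof -
  have Ane: "A \<noteq> {}" using bA by auto
  have maxd: "\<And>x. x \<in> A \<Longrightarrow> (\<forall>z\<in>A. le x z \<longrightarrow> z = x) \<Longrightarrow> r x = d"
  proof -
    fix x assume xA: "x \<in> A" and xmax: "\<forall>z\<in>A. le x z \<longrightarrow> z = x"
    have "d \<in> r ` A" using Max_in[of "r ` A"] fin Ane dd by auto
    then obtain z where zA: "z \<in> A" and rz: "r z = d" by auto
    obtain z' where z'A: "z' \<in> A" and zz': "le z z'" and z'max: "\<forall>v\<in>A. le z' v \<longrightarrow> v = z'"
      using fin_max[OF fin po _ zA] by auto
    have "r z \<le> r z'" using rank_key[OF fin po rk zA z'A zz'] by auto
    moreover have "r z' \<le> d" using dd fin z'A by simp
    ultimately have rz': "r z' = d" using rz by simp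
    obtain C where "is_maximal_chain A le C" "card C = r x" using max_chain_ex[OF fin po rk xA xmax] by blast
    moreover obtain D where "is_maximal_chain A le D" "card D = r z'"
      using max_chain_ex[OF fin po rk z'A z'max] by blast
    ultimately show "r x = d" using gr rz' unfolding graded_def by metis
  qed
  obtain x where xA: "x \<in> A" and bx: "le b x" and xmax: "\<forall>v\<in>A. le x v \<longrightarrow> v = x"
    using fin_max[OF fin po _ bA] by auto
  have "r x = d" using maxd xA xmax by blast
  then obtain y where "y \<in> A" "le b y" "r y = t" using rank_key[OF fin po rk bA xA bx] t1 t2 by blast
  thus ?thesis by blast
qed


lemma sot_append:
  "(j,a) \<in> set_of_tuple (xs @ ys) \<longleftrightarrow>
     (j,a) \<in> set_of_tuple xs \<or> (length xs < j \<and> (j - length xs, a) \<in> set_of_tuple ys)"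
  unfolding set_of_tuple_def
  by (cases "j \<le> length xs") (auto simp: nth_append)

lemma sot_rep: "(j,a) \<in> set_of_tuple (replicate c X) \<longleftrightarrow> 1 \<le> j \<and> j \<le> c \<and> a \<in> X"
  unfolding set_of_tuple_def by auto

lemma len_blocks:
  "length (concat (map (\<lambda>k. replicate (c k) (T k)) [p..<N])) = (\<Sum>l\<in>{p..<N}. c l)"
  by (induction N) auto

lemma sot_blocks:
  "(j,a) \<in> set_of_tuple (concat (map (\<lambda>k. replicate (c k) (T k)) [p..<N])) \<longleftrightarrow>
   (\<exists>k\<in>{p..<N}. (\<Sum>l\<in>{p..<k}. c l) < j \<and> j \<le> (\<Sum>l\<in>{p..<Suc k}. c l) \<and> a \<in> T k)"
proof (induction N arbitrary: j)
  case 0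
  then show ?case by (simp add: set_of_tuple_def)
next
  case (Suc N)
  show ?case
  proof (cases "p \<le> N")
    case False
    then show ?thesis by (simp add: set_of_tuple_def)
  next
    case True
    have "concat (map (\<lambda>k. replicate (c k) (T k)) [p..<Suc N]) =
      concat (map (\<lambda>k. replicate (c k) (T k)) [p..<N]) @ replicate (c N) (T N)"
      using True by simp
    moreover have "{p..<Suc N} = insert N {p..<N}" using True by auto
    ultimately show ?thesis
      using True by (auto simp: sot_append sot_rep len_blocks Suc.IH)
  qed
qed


theorem lemma2p5:
  fixes A :: "'a set" and le :: "'a \<Rightarrow> 'a \<Rightarrow> bool" and r :: "'a \<Rightarrow> nat"
    and d m s :: nat and n i :: "nat \<Rightarrow> nat"
  assumes "finite A" and "A \<noteq> {}"
    and "partial_order_on' A le"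
    and "graded A le"
    and "is_rank_function A le r"
    and "d = Max (r ` A)"
    and "m \<ge> 1"
    and "s \<ge> 1"
    and "\<forall>k\<in>{1..s}. n k \<ge> 1"
    and "(\<Sum>k=0..s. n k) = m"
    and "\<forall>k\<in>{1..<s}. i (Suc k) < i k"
    and "i 1 < d"
  shows "frakX (prod_carrier m A) (prod_le le)
           (set_of_tuple (replicate (n 0) (Lset A r d)
              @ concat (map (\<lambda>k. replicate (n k) (Lset A r (i k))) [1..<Suc s])))
         = set_of_tuple (replicate (n 0 + 1) (Lset A r (i 1 + 1))
              @ concat (map (\<lambda>k. replicate (n (k - 1)) (Lset A r (i k + 1))) [2..<Suc s])
              @ replicate (n s - 1) (Lset A r 0))"
proof -
  note fin = assms(1) and po = assms(3) and gr = assms(4) and rk = assms(5) and dd = assms(6)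
  have refl: "\<And>y. y \<in> A \<Longrightarrow> le y y" using po unfolding partial_order_on'_def by blast
  have antis: "\<And>y z. y \<in> A \<Longrightarrow> z \<in> A \<Longrightarrow> le y z \<Longrightarrow> le z y \<Longrightarrow> y = z"
    using po unfolding partial_order_on'_def by blast
  define S where "S k = (\<Sum>l<k. n l)" for k
  have S_Suc: "\<And>k. S (Suc k) = S k + n k" by (simp add: S_def)
  have S_m: "S (Suc s) = m" using assms(10) by (simp add: S_def lessThan_Suc_atMost atLeast0AtMost)
  have S_mono: "\<And>k k'. k \<le> k' \<Longrightarrow> S k \<le> S k'"
    unfolding S_def by (rule sum_mono2) auto
  have S_strict: "\<And>k k'. 1 \<le> k \<Longrightarrow> k \<le> s \<Longrightarrow> k < k' \<Longrightarrow> S k < S k'"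
  proof -
    fix k k' :: nat assume "1 \<le> k" "k \<le> s" "k < k'"
    hence "n k \<ge> 1" using assms(9) by auto
    hence "S k < S (Suc k)" using S_Suc by simp
    also have "\<dots> \<le> S k'" using S_mono \<open>k < k'\<close> by auto
    finally show "S k < S k'" .
  qed
  have S1: "S 1 = n 0" by (simp add: S_def)
  have S_eq: "\<And>k. 1 \<le> k \<Longrightarrow> n 0 + (\<Sum>l\<in>{1..<k}. n l) = S k"
    by (simp add: S_def lessThan_atLeast0 sum.atLeast_Suc_lessThan)
  have S_eq2: "\<And>k. 1 \<le> k \<Longrightarrow> n 0 + (\<Sum>l\<in>{2..<Suc k}. n (l - 1)) = S k"
  proof -
    fix k :: nat assume "1 \<le> k"
    thus "n 0 + (\<Sum>l\<in>{2..<Suc k}. n (l - 1)) = S k"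
    proof (induction k rule: nat_induct_at_least)
      case base then show ?case using S1 by simp
      case (Suc k)
      then show ?case by (simp add: S_Suc)
    qed
  qed
  have i_anti: "\<And>k k'. 1 \<le> k \<Longrightarrow> k < k' \<Longrightarrow> k' \<le> s \<Longrightarrow> i k' < i k"
  proof -
    fix k k' :: nat assume h: "1 \<le> k" "k < k'" "k' \<le> s"
    have "\<forall>e. k + Suc e \<le> s \<longrightarrow> i (k + Suc e) < i k"
    proof
      fix e show "k + Suc e \<le> s \<longrightarrow> i (k + Suc e) < i k"
      proof (induction e)
        case 0 then show ?case using assms(11) h(1) by auto
      next
        case (Suc e)
        show ?case
        proof
          assume "k + Suc (Suc e) \<le> s"
          hence "i (Suc (k + Suc e)) < i (k + Suc e)" using assms(11) h(1) by auto
          thus "i (k + Suc (Suc e)) < i k" using Suc \<open>k + Suc (Suc e) \<le> s\<close> by auto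
        qed
      qed
    qed
    from this[rule_format, of "k' - k - 1"] h show "i k' < i k" by auto
  qed
  have i_le: "\<And>k k'. 1 \<le> k \<Longrightarrow> k \<le> k' \<Longrightarrow> k' \<le> s \<Longrightarrow> i k' \<le> i k"
    using i_anti by (metis le_eq_less_or_eq less_imp_le)
  have i_lt_d: "\<And>k. 1 \<le> k \<Longrightarrow> k \<le> s \<Longrightarrow> i k < d"
    using i_le[of 1] assms(12) by (metis le_less_trans order_refl)
  have r1: "\<And>x. x \<in> A \<Longrightarrow> 1 \<le> r x" using rank_ge1_F1[OF fin po rk] by blast
  have rd: "\<And>x. x \<in> A \<Longrightarrow> r x \<le> d" using dd fin by simp
  have Ld: "Lset A r d = A" using rd unfolding Lset_def by auto
  have L0: "Lset A r 0 = {}" using r1 unfolding Lset_def by fastforce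
  define I where "I = set_of_tuple (replicate (n 0) (Lset A r d)
              @ concat (map (\<lambda>k. replicate (n k) (Lset A r (i k))) [1..<Suc s]))"
  define R where "R = set_of_tuple (replicate (n 0 + 1) (Lset A r (i 1 + 1))
              @ concat (map (\<lambda>k. replicate (n (k - 1)) (Lset A r (i k + 1))) [2..<Suc s])
              @ replicate (n s - 1) (Lset A r 0))"
  define Q where "Q = prod_carrier m A"
  have Imem: "\<And>j a. (j,a) \<in> I \<longleftrightarrow> (1 \<le> j \<and> j \<le> n 0 \<and> a \<in> A) \<or>
      (\<exists>k\<in>{1..<Suc s}. S k < j \<and> j \<le> S (Suc k) \<and> a \<in> A \<and> r a \<le> i k)"
  proof -
    fix j a
    have e1: "\<And>k. 1 \<le> k \<Longrightarrow> ((\<Sum>l\<in>{1..<k}. n l) < j - n 0 \<and> n 0 < j) = (S k < j)"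
    proof -
      fix k :: nat assume "1 \<le> k"
      from S_eq[OF this] show "?thesis k" by linarith
    qed
    have e2: "\<And>k. 1 \<le> k \<Longrightarrow> n 0 < j \<Longrightarrow> (j - n 0 \<le> (\<Sum>l\<in>{1..<Suc k}. n l)) = (j \<le> S (Suc k))"
    proof -
      fix k :: nat assume "1 \<le> k" "n 0 < j"
      from S_eq[of "Suc k"] this show "?thesis k" by linarith
    qed
    show "?thesis j a"
      unfolding I_def sot_append sot_rep sot_blocks length_replicate Ld
      unfolding Lset_def mem_Collect_eq
      apply (rule iffI)
       apply (erule disjE)
        apply blast
       apply (erule conjE, erule bexE)
      subgoal for k using e1[of k] e2[of k] by auto
      apply (erule disjE)
       apply blast
      apply (erule bexE)
      subgoal for k using e1[of k] e2[of k] by auto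
      done
  qed
  have Rmem: "\<And>j a. (j,a) \<in> R \<longleftrightarrow> (1 \<le> j \<and> j \<le> S 1 + 1 \<and> a \<in> A \<and> r a \<le> i 1 + 1) \<or>
      (\<exists>k\<in>{2..<Suc s}. S (k - 1) + 1 < j \<and> j \<le> S k + 1 \<and> a \<in> A \<and> r a \<le> i k + 1)"
  proof -
    fix j a
    have e1: "\<And>k. 2 \<le> k \<Longrightarrow> ((\<Sum>l\<in>{2..<k}. n (l - 1)) < j - (n 0 + 1) \<and> n 0 + 1 < j) = (S (k - 1) + 1 < j)"
    proof -
      fix k :: nat assume "2 \<le> k"
      hence "n 0 + (\<Sum>l\<in>{2..<k}. n (l - 1)) = S (k - 1)" using S_eq2[of "k - 1"] by simp
      thus "?thesis k" by linarith
    qed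
    have e2: "\<And>k. 1 \<le> k \<Longrightarrow> n 0 + 1 < j \<Longrightarrow> (j - (n 0 + 1) \<le> (\<Sum>l\<in>{2..<Suc k}. n (l - 1))) = (j \<le> S k + 1)"
    proof -
      fix k :: nat assume "1 \<le> k" "n 0 + 1 < j"
      from S_eq2[of k] this show "?thesis k" by linarith
    qed
    show "?thesis j a"
      unfolding R_def sot_append sot_rep sot_blocks length_replicate L0 len_blocks S1
      unfolding Lset_def mem_Collect_eq empty_iff
      apply (rule iffI)
       apply (erule disjE)
        apply blast
       apply (erule conjE, erule disjE)
        apply (erule bexE)
      subgoal for k using e1[of k] e2[of k] by auto
       apply blast
      apply (erule disjE)
       apply blast
      apply (erule bexE)
      subgoal for k using e1[of k] e2[of k] by auto
      done
  qed
  have Icomp: "\<And>j a. 1 \<le> j \<Longrightarrow> j \<le> m \<Longrightarrow> a \<in> A \<Longrightarrow>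
      (j,a) \<notin> I \<longleftrightarrow> (\<exists>k\<in>{1..s}. S k < j \<and> i k < r a)"
  proof -
    fix j a assume j1: "1 \<le> j" and jm: "j \<le> m" and aA: "a \<in> A"
    show "(j,a) \<notin> I \<longleftrightarrow> (\<exists>k\<in>{1..s}. S k < j \<and> i k < r a)"
    proof
      assume nI: "(j,a) \<notin> I"
      hence jn0: "n 0 < j" using Imem j1 aA by fastforce
      define K where "K = {k\<in>{1..s}. S k < j}"
      have K1: "1 \<in> K" using jn0 S1 assms(8) unfolding K_def by auto
      have Kfin: "finite K" unfolding K_def by auto
      define k0 where "k0 = Max K"
      have k0K: "k0 \<in> K" using Max_in[OF Kfin] K1 unfolding k0_def by auto
      have jle: "j \<le> S (Suc k0)"
      proof (cases "k0 = s")
        case True thus ?thesis using S_m jm by simp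
      next
        case False
        hence "Suc k0 \<le> s" using k0K unfolding K_def by auto
        hence "Suc k0 \<notin> K" using Max_ge[OF Kfin, of "Suc k0"] unfolding k0_def by auto
        thus ?thesis using \<open>Suc k0 \<le> s\<close> unfolding K_def by auto
      qed
      have "\<not> r a \<le> i k0" using nI Imem[of j a] k0K jle aA unfolding K_def by auto
      thus "\<exists>k\<in>{1..s}. S k < j \<and> i k < r a" using k0K unfolding K_def by auto
    next
      assume "\<exists>k\<in>{1..s}. S k < j \<and> i k < r a"
      then obtain k where k: "1 \<le> k" "k \<le> s" "S k < j" "i k < r a" by auto
      show "(j,a) \<notin> I"
      proof
        assume "(j,a) \<in> I"
        hence "(1 \<le> j \<and> j \<le> n 0 \<and> a \<in> A) \<or>
          (\<exists>k\<in>{1..<Suc s}. S k < j \<and> j \<le> S (Suc k) \<and> a \<in> A \<and> r a \<le> i k)" using Imem by blast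
        thus False
        proof
          assume "1 \<le> j \<and> j \<le> n 0 \<and> a \<in> A"
          moreover have "S 1 \<le> S k" using S_mono k by auto
          ultimately show False using S1 k by auto
        next
          assume "\<exists>k\<in>{1..<Suc s}. S k < j \<and> j \<le> S (Suc k) \<and> a \<in> A \<and> r a \<le> i k"
          then obtain k0 where k0: "1 \<le> k0" "k0 \<le> s" "S k0 < j" "j \<le> S (Suc k0)" "r a \<le> i k0" by auto
          have "k < Suc k0"
          proof (rule ccontr)
            assume "\<not> k < Suc k0"
            hence "S (Suc k0) \<le> S k" using S_mono by auto
            thus False using k0 k by auto
          qed
          hence "i k0 \<le> i k" using i_le k k0 by auto
          thus False using k k0 by auto
        qed
      qed
    qed
  qed
  have Rchar: "\<And>j a. (j,a) \<in> R \<longleftrightarrow> a \<in> A \<and> 1 \<le> j \<and> (\<exists>k\<in>{1..s}. j \<le> S k + 1 \<and> r a \<le> i k + 1)"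
  proof -
    fix j a
    show "(j,a) \<in> R \<longleftrightarrow> a \<in> A \<and> 1 \<le> j \<and> (\<exists>k\<in>{1..s}. j \<le> S k + 1 \<and> r a \<le> i k + 1)"
    proof
      assume "(j,a) \<in> R"
      thus "a \<in> A \<and> 1 \<le> j \<and> (\<exists>k\<in>{1..s}. j \<le> S k + 1 \<and> r a \<le> i k + 1)"
        unfolding Rmem using assms(8) by auto
    next
      assume h: "a \<in> A \<and> 1 \<le> j \<and> (\<exists>k\<in>{1..s}. j \<le> S k + 1 \<and> r a \<le> i k + 1)"
      then obtain k where k: "1 \<le> k" "k \<le> s" "j \<le> S k + 1" "r a \<le> i k + 1" by auto
      define P where "P k = (1 \<le> k \<and> k \<le> s \<and> j \<le> S k + 1)" for k
      define k0 where "k0 = (LEAST k. P k)"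
      have Pk: "P k" using k unfolding P_def by auto
      have Pk0: "P k0" using LeastI[of P, OF Pk] unfolding k0_def .
      have k0k: "k0 \<le> k" using Least_le[of P, OF Pk] unfolding k0_def .
      have ra: "r a \<le> i k0 + 1" using i_le[of k0 k] Pk0 k k0k unfolding P_def by auto
      show "(j,a) \<in> R"
      proof (cases "k0 = 1")
        case True thus ?thesis unfolding Rmem using Pk0 ra h unfolding P_def by auto
      next
        case False
        hence "k0 - 1 < k0" "1 \<le> k0 - 1" using Pk0 unfolding P_def by auto
        hence "\<not> P (k0 - 1)" using not_less_Least[of "k0 - 1" P] unfolding k0_def by blast
        hence "S (k0 - 1) + 1 < j" using Pk0 \<open>1 \<le> k0 - 1\<close> unfolding P_def by auto
        moreover have "k0 \<in> {2..<Suc s}" using Pk0 False unfolding P_def by auto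
        ultimately show ?thesis unfolding Rmem using Pk0 ra h unfolding P_def by blast
      qed
    qed
  qed
  have Smk: "\<And>k. 1 \<le> k \<Longrightarrow> k \<le> s \<Longrightarrow> S k + 1 \<le> m"
  proof -
    fix k :: nat assume "1 \<le> k" "k \<le> s"
    hence "S k < S (Suc s)" using S_strict by auto
    thus "S k + 1 \<le> m" using S_m by simp
  qed
  have Qmem: "\<And>j a. (j,a) \<in> Q \<longleftrightarrow> 1 \<le> j \<and> j \<le> m \<and> a \<in> A"
    unfolding Q_def prod_carrier_def by auto
  have minchar: "\<And>x. x \<in> minimal_elems (Q - I) (prod_le le) \<longleftrightarrow>
      (\<exists>k\<in>{1..s}. \<exists>a\<in>A. r a = i k + 1 \<and> x = (S k + 1, a))"
  proof -
    fix x
    show "x \<in> minimal_elems (Q - I) (prod_le le) \<longleftrightarrow>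
      (\<exists>k\<in>{1..s}. \<exists>a\<in>A. r a = i k + 1 \<and> x = (S k + 1, a))"
    proof
      assume xm: "x \<in> minimal_elems (Q - I) (prod_le le)"
      obtain j a where x: "x = (j,a)" by (cases x)
      have xQ: "1 \<le> j" "j \<le> m" "a \<in> A" "(j,a) \<notin> I" using xm x Qmem unfolding minimal_elems_def by auto
      have xmin: "\<forall>y\<in>Q - I. prod_le le y (j,a) \<longrightarrow> y = (j,a)" using xm x unfolding minimal_elems_def by auto
      obtain k where k: "1 \<le> k" "k \<le> s" "S k < j" "i k < r a" using Icomp xQ by auto
      obtain a' where a': "a' \<in> A" "le a' a" "r a' = i k + 1"
      proof -
        have "\<forall>t. 1 \<le> t \<and> t \<le> r a \<longrightarrow> (\<exists>y\<in>A. le y a \<and> r y = t)"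
          using rank_ge1_F1[OF fin po rk xQ(3)] by blast
        hence "\<exists>y\<in>A. le y a \<and> r y = i k + 1" using k by simp
        thus ?thesis using that by blast
      qed
      have "(S k + 1, a') \<in> Q - I"
        using Qmem Icomp[of "S k + 1" a'] a' k Smk by auto
      moreover have "prod_le le (S k + 1, a') (j,a)" unfolding prod_le_def using k a' by auto
      ultimately have "(S k + 1, a') = (j,a)" using xmin by blast
      thus "\<exists>k\<in>{1..s}. \<exists>a\<in>A. r a = i k + 1 \<and> x = (S k + 1, a)" using k a' x by auto
    next
      assume "\<exists>k\<in>{1..s}. \<exists>a\<in>A. r a = i k + 1 \<and> x = (S k + 1, a)"
      then obtain k a where k: "1 \<le> k" "k \<le> s" and aA: "a \<in> A" and ra: "r a = i k + 1"
        and x: "x = (S k + 1, a)" by auto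
      have xQI: "x \<in> Q - I" using Qmem Icomp[of "S k + 1" a] k aA ra Smk x by auto
      have "\<forall>y\<in>Q - I. prod_le le y x \<longrightarrow> y = x"
      proof (intro ballI impI)
        fix y assume yQI: "y \<in> Q - I" and yx: "prod_le le y x"
        obtain j' a' where y: "y = (j',a')" by (cases y)
        have j'1: "1 \<le> j'" and j'm: "j' \<le> m" and a'A: "a' \<in> A" and nI: "(j',a') \<notin> I"
          using yQI y Qmem by auto
        obtain k' where k': "1 \<le> k'" "k' \<le> s" "S k' < j'" "i k' < r a'" using Icomp j'1 j'm a'A nI by auto
        have j'le: "j' \<le> S k + 1" and a'a: "le a' a" using yx x y unfolding prod_le_def by auto
        have "k' \<le> k"
        proof (rule ccontr)
          assume "\<not> k' \<le> k"
          hence "S k < S k'" using S_strict k by auto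
          thus False using k' j'le by auto
        qed
        hence ikk: "i k \<le> i k'" using i_le k k' by auto
        have rk': "r a' \<le> r a \<and> (a' \<noteq> a \<longrightarrow> r a' < r a)" using rank_key[OF fin po rk a'A aA a'a] by auto
        have "a' = a" using rk' ra ikk k' by auto
        hence "i k' = i k" using ikk k' ra by auto
        hence "k' = k" using i_anti[of k' k] i_anti[of k k'] k k' by (metis less_irrefl nat_neq_iff)
        hence "j' = S k + 1" using k' j'le by auto
        thus "y = x" using y x \<open>a' = a\<close> by simp
      qed
      thus "x \<in> minimal_elems (Q - I) (prod_le le)" using xQI unfolding minimal_elems_def by auto
    qed
  qed
  have "frakX Q (prod_le le) I = R"
  proof (rule set_eqI)
    fix y :: "nat \<times> 'a"
    obtain j b where y: "y = (j,b)" by (cases y)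
    show "y \<in> frakX Q (prod_le le) I \<longleftrightarrow> y \<in> R"
    proof
      assume "y \<in> frakX Q (prod_le le) I"
      then obtain x where "y \<in> Q" "x \<in> minimal_elems (Q - I) (prod_le le)" "prod_le le y x"
        unfolding frakX_def by auto
      then obtain k a where yQ: "y \<in> Q" and k: "1 \<le> k" "k \<le> s" and aA: "a \<in> A" and ra: "r a = i k + 1"
        and yx: "prod_le le y (S k + 1, a)"
        unfolding minchar by fastforce
      have bA: "b \<in> A" and j1: "1 \<le> j" using yQ y Qmem by auto
      have jle: "j \<le> S k + 1" and ba: "le b a" using yx y unfolding prod_le_def by auto
      have "r b \<le> r a" using rank_key[OF fin po rk bA aA ba] by auto
      thus "y \<in> R" unfolding y Rchar using bA j1 k jle ra by auto
    next
      assume "y \<in> R"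
      then obtain k where bA: "b \<in> A" and j1: "1 \<le> j" and k: "1 \<le> k" "k \<le> s"
        and jle: "j \<le> S k + 1" and rb: "r b \<le> i k + 1"
        unfolding y Rchar by auto
      have "i k < d" using i_lt_d k by blast
      hence "i k + 1 \<le> d" by simp
      then obtain a where aA: "a \<in> A" and ba: "le b a" and ra: "r a = i k + 1"
        using F2[OF fin po rk gr dd bA rb] by auto
      have "(S k + 1, a) \<in> minimal_elems (Q - I) (prod_le le)" unfolding minchar using k aA ra by auto
      moreover have "y \<in> Q" using Qmem y bA j1 jle Smk k by fastforce
      moreover have "prod_le le y (S k + 1, a)" unfolding y prod_le_def using jle ba by auto
      ultimately show "y \<in> frakX Q (prod_le le) I" unfolding frakX_def by blast
    qed
  qed
  thus ?thesis unfolding Q_def I_def R_def .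
qed

end
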